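(* Let $X$ and $Y$ be Hausdorff compact spaces and $\pi: X \to Y$ a fully closed continuous surjection. Let $y_1, \dots, y_n \in Y$ be distinct points and, for each $i = 1,\dots,n$, let $f_i$ be a real-valued continuous function on $\pi^{-1}(y_i)$. Then there exists $\tilde f \in C(X)$ such that $\tilde f|_{\pi^{-1}(y_i)} = f_i$ for $i=1,\dots,n$ and $\tilde f$ has oscillation $0$ (i.e. is constant) on $\pi^{-1}(y')$ for every $y' \in Y \setminus \{y_1,\dots,y_n\}$.
   Context: A continuous surjection $\pi: X \to Y$ between Hausdorff compacta is fully closed if for any two closed disjoint subsets $F_1, F_2 \subset X$ the set $\pi(F_1)\cap\pi(F_2)$ is finite. $C(X)$ denotes the real continuous functions on $X$. *)

theory Defs
  imports "HOL-Analysis.Analysis"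
begin

definition fully_closed :: "'a topology \<Rightarrow> 'b topology \<Rightarrow> ('a \<Rightarrow> 'b) \<Rightarrow> bool" where
  "fully_closed X Y \<pi> \<longleftrightarrow>
     (\<forall>F1 F2. closedin X F1 \<and> closedin X F2 \<and> F1 \<inter> F2 = {} \<longrightarrow>
        finite (\<pi> ` F1 \<inter> \<pi> ` F2))"

definition fibre :: "'a topology \<Rightarrow> ('a \<Rightarrow> 'b) \<Rightarrow> 'b \<Rightarrow> 'a set" where
  "fibre X \<pi> y = {x \<in> topspace X. \<pi> x = y}"

end

theory Submission
  imports Defs
begin

theorem corollary4p4:
  fixes X :: "'a topology" and Y :: "'b topology" and \<pi> :: "'a \<Rightarrow> 'b"
    and n :: nat and y :: "nat \<Rightarrow> 'b" and f :: "nat \<Rightarrow> 'a \<Rightarrow> real"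
  assumes "Hausdorff_space X" and "compact_space X"
    and "Hausdorff_space Y" and "compact_space Y"
    and "continuous_map X Y \<pi>" and "\<pi> ` topspace X = topspace Y"
    and "fully_closed X Y \<pi>"
    and "inj_on y {..<n}" and "y ` {..<n} \<subseteq> topspace Y"
    and "\<And>i. i < n \<Longrightarrow> continuous_map (subtopology X (fibre X \<pi> (y i))) euclideanreal (f i)"
  shows "\<exists>g. continuous_map X euclideanreal g
           \<and> (\<forall>i<n. \<forall>x\<in>fibre X \<pi> (y i). g x = f i x)
           \<and> (\<forall>y'\<in>topspace Y - y ` {..<n}. \<exists>c. \<forall>x\<in>fibre X \<pi> y'. g x = c)"
proof -
  note HX = assms(1) and cX = assms(2) and HY = assms(3) and contpi = assms(5)
    and fc = assms(7) and injy = assms(8) and yY = assms(9) and contf = assms(10)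
  define Y0 where "Y0 = y ` {..<n}"
  define K where "K = {x\<in>topspace X. \<pi> x \<in> Y0}"
  define r where "r = (\<lambda>x. SOME x'. x' \<in> topspace X \<and> \<pi> x' = \<pi> x)"
  define q where "q = (\<lambda>x. if \<pi> x \<in> Y0 then x else r x)"
  have r: "r x \<in> topspace X \<and> \<pi> (r x) = \<pi> x" if "x \<in> topspace X" for x
    unfolding r_def by (rule someI[where x=x]) (use that in auto)
  have q: "q x \<in> topspace X \<and> \<pi> (q x) = \<pi> x" if "x \<in> topspace X" for x
    using r[OF that] that by (auto simp: q_def)
  have qK: "q x = x" if "x \<in> K" for x using that by (auto simp: q_def K_def)
  have finY0: "finite Y0" by (simp add: Y0_def)
  have t1Y: "t1_space Y" using HY Hausdorff_imp_t1_space by blast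
  have closedfin: "closedin X {x\<in>topspace X. \<pi> x \<in> S}" if "finite S" for S
  proof -
    have "closedin Y (S \<inter> topspace Y)"
      using t1Y that by (simp add: t1_space_closedin_finite)
    then have "closedin X {x\<in>topspace X. \<pi> x \<in> S \<inter> topspace Y}"
      using closedin_continuous_map_preimage[OF contpi] by blast
    moreover have "{x\<in>topspace X. \<pi> x \<in> S \<inter> topspace Y} = {x\<in>topspace X. \<pi> x \<in> S}"
      using contpi by (auto simp: continuous_map_def)
    ultimately show ?thesis by simp
  qed
  have Kcl: "closedin X K" unfolding K_def using closedfin[OF finY0] .
  define Z where "Z = topology (\<lambda>U. U \<subseteq> q ` topspace X \<and> openin X {x\<in>topspace X. q x \<in> U})"
  have isZ: "istopology (\<lambda>U. U \<subseteq> q ` topspace X \<and> openin X {x\<in>topspace X. q x \<in> U})"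
  proof -
    have 1: "openin X {x\<in>topspace X. q x \<in> S \<inter> T}"
      if "openin X {x\<in>topspace X. q x \<in> S}" "openin X {x\<in>topspace X. q x \<in> T}" for S T
    proof -
      have "{x\<in>topspace X. q x \<in> S \<inter> T} = {x\<in>topspace X. q x \<in> S} \<inter> {x\<in>topspace X. q x \<in> T}"
        by auto
      then show ?thesis using that by auto
    qed
    have 2: "openin X {x\<in>topspace X. q x \<in> \<Union>\<K>}"
      if "\<forall>S\<in>\<K>. openin X {x\<in>topspace X. q x \<in> S}" for \<K>
    proof -
      have "{x\<in>topspace X. q x \<in> \<Union>\<K>} = (\<Union>S\<in>\<K>. {x\<in>topspace X. q x \<in> S})"
        by auto
      then show ?thesis using that by auto
    qed
    show ?thesis unfolding istopology_def using 1 2 by blast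
  qed
  have openZ: "openin Z U \<longleftrightarrow> U \<subseteq> q ` topspace X \<and> openin X {x\<in>topspace X. q x \<in> U}" for U
    unfolding Z_def using isZ by simp
  have topZ: "topspace Z = q ` topspace X"
  proof -
    have "{x\<in>topspace X. q x \<in> q ` topspace X} = topspace X" by auto
    then have "openin Z (q ` topspace X)" unfolding openZ by auto
    then have "q ` topspace X \<subseteq> topspace Z" by (simp add: openin_subset)
    moreover have "topspace Z \<subseteq> q ` topspace X"
      using openZ[of "topspace Z"] by auto
    ultimately show ?thesis by blast
  qed
  have contq: "continuous_map X Z q"
    unfolding continuous_map_def
  proof (intro conjI allI impI)
    show "q \<in> topspace X \<rightarrow> topspace Z" using topZ by auto
    fix U assume "openin Z U"
    then show "openin X {x \<in> topspace X. q x \<in> U}" using openZ by blast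
  qed
  have regX: "regular_space X" using compact_Hausdorff_imp_regular_space HX cX by blast
  have satcl: "closedin X (F \<union> ({x\<in>topspace X. \<pi> x \<in> \<pi> ` F} - K))" if F: "closedin X F" for F
  proof -
    let ?P = "{x\<in>topspace X. \<pi> x \<in> \<pi> ` F}"
    have piF: "closedin Y (\<pi> ` F)"
      using continuous_imp_closed_map[OF contpi cX HY] F by (simp add: closed_map_def)
    have Pcl: "closedin X ?P" using closedin_continuous_map_preimage[OF contpi piF] .
    have FP: "F \<subseteq> ?P" using closedin_subset[OF F] by auto
    show ?thesis
      unfolding closedin_def
    proof
      show "F \<union> (?P - K) \<subseteq> topspace X" using closedin_subset[OF F] by auto
      show "openin X (topspace X - (F \<union> (?P - K)))"
        unfolding openin_subopen[of X "topspace X - (F \<union> (?P - K))"]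
      proof
        fix x assume x: "x \<in> topspace X - (F \<union> (?P - K))"
        show "\<exists>T. openin X T \<and> x \<in> T \<and> T \<subseteq> topspace X - (F \<union> (?P - K))"
        proof (cases "x \<in> ?P")
          case False
          then show ?thesis
            using Pcl FP x by (intro exI[of _ "topspace X - ?P"]) auto
        next
          case True
          with x have xK: "x \<in> K" and xF: "x \<notin> F" by auto
          obtain V where V: "openin X V" "x \<in> V" "disjnt F (X closure_of V)"
            using regX F x xF unfolding regular_space by blast
          define S where "S = \<pi> ` (X closure_of V) \<inter> \<pi> ` F"
          have finS: "finite S"
            using fc F V(3) unfolding S_def fully_closed_def
            by (simp add: disjnt_def inf_commute)
          define W where "W = V - {z\<in>topspace X. \<pi> z \<in> S - Y0}"
          have "openin X W" unfolding W_def
            using V(1) closedfin[of "S - Y0"] finS by (intro openin_diff) auto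
          moreover have "x \<in> W" using xK V(2) by (auto simp: W_def K_def)
          moreover have "W \<subseteq> topspace X - (F \<union> (?P - K))"
          proof
            fix z assume z: "z \<in> W"
            have zV: "z \<in> V" "z \<in> topspace X" using z V(1) openin_subset by (auto simp: W_def)
            have zc: "z \<in> X closure_of V" using closure_of_subset[OF openin_subset[OF V(1)]] zV(1) by blast
            have "z \<notin> F" using V(3) zc by (auto simp: disjnt_def)
            moreover have "z \<notin> ?P - K"
            proof
              assume "z \<in> ?P - K"
              then have "\<pi> z \<in> S - Y0" using zc by (auto simp: S_def K_def)
              then show False using z zV by (auto simp: W_def)
            qed
            ultimately show "z \<in> topspace X - (F \<union> (?P - K))" using zV by auto
          qed
          ultimately show ?thesis by blast
        qed
      qed
    qed
  qed
  have sat: "{x\<in>topspace X. q x \<in> q ` F} = F \<union> ({x\<in>topspace X. \<pi> x \<in> \<pi> ` F} - K)"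
    if F: "F \<subseteq> topspace X" for F
  proof (intro set_eqI iffI)
    fix x assume "x \<in> {x\<in>topspace X. q x \<in> q ` F}"
    then obtain x' where x: "x \<in> topspace X" and x': "x' \<in> F" "q x = q x'" by auto
    have pe: "\<pi> x = \<pi> x'" using q[OF x] q[of x'] x' F by auto
    show "x \<in> F \<union> ({x\<in>topspace X. \<pi> x \<in> \<pi> ` F} - K)"
    proof (cases "x \<in> K")
      case True
      then have "x' \<in> K" using pe x' F by (auto simp: K_def)
      then show ?thesis using True qK x' by auto
    next
      case False
      then show ?thesis using pe x x' by auto
    qed
  next
    fix x assume x: "x \<in> F \<union> ({x\<in>topspace X. \<pi> x \<in> \<pi> ` F} - K)"
    show "x \<in> {x\<in>topspace X. q x \<in> q ` F}"
    proof (cases "x \<in> F")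
      case True then show ?thesis using F by auto
    next
      case False
      then obtain x' where "x' \<in> F" "\<pi> x = \<pi> x'" "x \<in> topspace X" "x \<notin> K" using x by auto
      then have "q x = q x'" by (auto simp: q_def K_def r_def)
      then show ?thesis using \<open>x' \<in> F\<close> \<open>x \<in> topspace X\<close> by auto
    qed
  qed
  have closedq: "closed_map X Z q"
    unfolding closed_map_def
  proof (intro allI impI)
    fix F assume F: "closedin X F"
    have Fs: "F \<subseteq> topspace X" using closedin_subset[OF F] .
    have "openin Z (topspace Z - q ` F)"
      unfolding openZ
    proof
      show "topspace Z - q ` F \<subseteq> q ` topspace X" using topZ by auto
      have "{x \<in> topspace X. q x \<in> topspace Z - q ` F} = topspace X - {x\<in>topspace X. q x \<in> q ` F}"
        using topZ by auto
      then show "openin X {x \<in> topspace X. q x \<in> topspace Z - q ` F}"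
        using sat[OF Fs] satcl[OF F] by (simp add: closedin_def)
    qed
    moreover have "q ` F \<subseteq> topspace Z" using Fs topZ by auto
    ultimately show "closedin Z (q ` F)" by (simp add: closedin_def)
  qed
  have normZ: "normal_space Z"
    using normal_space_continuous_closed_map_image[OF _ contq closedq topZ[symmetric]]
      compact_Hausdorff_or_regular_imp_normal_space cX HX by blast
  define F where "F = (\<lambda>x. f (inv_into {..<n} y (\<pi> x)) x)"
  have iv: "inv_into {..<n} y (y i) = i" if "i < n" for i
    using injy that by (simp add: inv_into_f_f)
  have fibK: "fibre X \<pi> (y i) \<subseteq> K" if "i < n" for i
    using that by (auto simp: fibre_def K_def Y0_def)
  have Kun: "K = (\<Union>i<n. fibre X \<pi> (y i))" by (auto simp: fibre_def K_def Y0_def)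
  have contFX: "continuous_map (subtopology X K) euclideanreal F"
  proof -
    obtain G where G: "continuous_map (subtopology X K) euclideanreal G"
      "\<And>x i. \<lbrakk>i \<in> {..<n}; x \<in> topspace (subtopology X K) \<inter> fibre X \<pi> (y i)\<rbrakk> \<Longrightarrow> G x = f i x"
    proof (rule pasting_lemma_exists_closed[of "{..<n}" "subtopology X K" "\<lambda>i. fibre X \<pi> (y i)" _ f])
      show "finite {..<n}" by simp
      show "topspace (subtopology X K) \<subseteq> (\<Union>i\<in>{..<n}. fibre X \<pi> (y i))"
        using Kun by auto
      fix i assume i: "i \<in> {..<n}"
      have "closedin X (fibre X \<pi> (y i))"
        using closedfin[of "{y i}"] by (simp add: fibre_def)
      then show "closedin (subtopology X K) (fibre X \<pi> (y i))"
        using fibK i by (simp add: closedin_subset_topspace)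
      have "subtopology (subtopology X K) (fibre X \<pi> (y i)) = subtopology X (fibre X \<pi> (y i))"
        using fibK i by (simp add: subtopology_subtopology Int_absorb1)
      then show "continuous_map (subtopology (subtopology X K) (fibre X \<pi> (y i))) euclideanreal (f i)"
        using contf i by simp
    next
      fix i j x assume "i \<in> {..<n}" "j \<in> {..<n}" "x \<in> topspace (subtopology X K) \<inter> fibre X \<pi> (y i) \<inter> fibre X \<pi> (y j)"
      then have "i = j" using injy by (auto simp: fibre_def inj_on_def)
      then show "f i x = f j x" by simp
    qed blast
    have "G x = F x" if "x \<in> topspace (subtopology X K)" for x
    proof -
      have "x \<in> K" using that by simp
      then obtain i where i: "i < n" "x \<in> fibre X \<pi> (y i)" using Kun by auto
      then have "\<pi> x = y i" by (simp add: fibre_def)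
      then show ?thesis using G(2)[of i x] i that iv by (auto simp: F_def)
    qed
    then show ?thesis using G(1) continuous_map_eq by blast
  qed
  have KZ: "K \<subseteq> topspace Z"
  proof
    fix x assume x: "x \<in> K"
    then have "x \<in> topspace X" "q x = x" using qK by (auto simp: K_def)
    then show "x \<in> topspace Z" using topZ by (metis image_eqI)
  qed
  have qKim: "q ` A = A" if "A \<subseteq> K" for A
  proof -
    have "q ` A = (\<lambda>x. x) ` A" using qK that by (intro image_cong) auto
    then show ?thesis by simp
  qed
  have KclZ: "closedin Z K" using closedq Kcl qKim[of K] by (metis closed_map_def order_refl)
  have contFZ: "continuous_map (subtopology Z K) euclideanreal F"
    unfolding continuous_map_closedin
  proof (intro conjI allI impI)
    show "F \<in> topspace (subtopology Z K) \<rightarrow> topspace euclideanreal" by simp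
    fix C :: "real set" assume C: "closedin euclideanreal C"
    have tK: "topspace (subtopology Z K) = K" "topspace (subtopology X K) = K"
      using KZ Kcl closedin_subset by auto
    have "closedin (subtopology X K) {x \<in> K. F x \<in> C}"
      using closedin_continuous_map_preimage[OF contFX C] tK(2) by (simp only:)
    then have "closedin X {x \<in> K. F x \<in> C}" using Kcl closedin_trans_full by blast
    then have "closedin Z (q ` {x \<in> K. F x \<in> C})" using closedq by (simp add: closed_map_def)
    then have "closedin Z {x \<in> K. F x \<in> C}" using qKim[of "{x \<in> K. F x \<in> C}"] by auto
    then show "closedin (subtopology Z K) {x \<in> topspace (subtopology Z K). F x \<in> C}"
      using tK by (simp add: closedin_subset_topspace)
  qed
  obtain G where G: "continuous_map Z euclideanreal G" "\<And>x. x \<in> K \<Longrightarrow> G x = F x"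
    using Tietze_extension_realinterval[OF normZ KclZ _ _ contFZ, of UNIV] by auto
  show ?thesis
  proof (intro exI[of _ "G \<circ> q"] conjI allI impI ballI)
    show "continuous_map X euclideanreal (G \<circ> q)" using G(1) contq continuous_map_compose by blast
  next
    fix i x assume i: "i < n" and x: "x \<in> fibre X \<pi> (y i)"
    then have xK: "x \<in> K" using fibK by blast
    have "\<pi> x = y i" using x by (simp add: fibre_def)
    then show "(G \<circ> q) x = f i x" using G(2)[OF xK] qK[OF xK] iv[OF i] by (simp add: F_def)
  next
    fix y' assume y': "y' \<in> topspace Y - y ` {..<n}"
    show "\<exists>c. \<forall>x\<in>fibre X \<pi> y'. (G \<circ> q) x = c"
    proof (intro exI[of _ "G (SOME x'. x' \<in> topspace X \<and> \<pi> x' = y')"] ballI)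
      fix x assume x: "x \<in> fibre X \<pi> y'"
      then have "\<pi> x = y'" "\<pi> x \<notin> Y0" using y' by (auto simp: fibre_def Y0_def)
      then show "(G \<circ> q) x = G (SOME x'. x' \<in> topspace X \<and> \<pi> x' = y')" by (simp add: q_def r_def)
    qed
  qed
qed

end
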